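(* Let $\Gamma$ be a finite simplicial graph with vertex set $V=\{a_0,\ldots,a_{n-1}\}$. Every $w\in A(\Gamma)$ admits a unique canonical expression.
   Context: $A(\Gamma)=\langle V\mid[a,b]=1\text{ for }\{a,b\}\in E(\Gamma)\rangle$. The word length $\|w\|$ is the least $\ell\ge0$ with $w=s_1^{e_1}\cdots s_\ell^{e_\ell}$, $s_i\in V$, $e_i\in\{\pm1\}$. For a word $w=s_1^{e_1}\cdots s_\ell^{e_\ell}$ with $\ell=\|w\|$, $s_i\in V$, $e_i\in\{\pm1\}$, its right-counting vector $(f_1,\ldots,f_\ell)$ is given by $f_i=\min\|y\|$, the minimum over $y\in A(\Gamma)$ such that $s_i^{e_i}s_{i+1}^{e_{i+1}}\cdots s_\ell^{e_\ell}=x\,s_i^{e_i}\,y$ for some $x\in\langle \mathrm{lk}_\Gamma(s_i)\rangle$, where $\mathrm{lk}_\Gamma(s)$ is the set of vertices adjacent to $s$. Such a word is a canonical expression for $w$ if (A) $f_1\ge f_2\ge\cdots\ge f_\ell$, and (B) whenever $f_i=f_j$ with $i<j$ and $s_i=a_p$, $s_j=a_q$, we have $p<q$ and $[a_p,a_q]=1$. Uniqueness is as a word (sequence of letters $s_i^{e_i}$). *)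

theory Defs
  imports Main
begin

text \<open>Right-angled Artin group A(Gamma) on the vertex set V = {0..<n} (vertex i stands for a_i),
  with edge relation E.  A letter is a pair (s, e) with s a vertex and e = True for exponent +1,
  e = False for exponent -1.  Group elements are represented by words modulo the congruence
  generated by free cancellation and the defining commutation relations.\<close>

type_synonym letter = "nat \<times> bool"

definition simplicial_graph :: "nat \<Rightarrow> (nat \<Rightarrow> nat \<Rightarrow> bool) \<Rightarrow> bool" where
  "simplicial_graph n E \<longleftrightarrow>
     (\<forall>a b. E a b \<longrightarrow> a < n \<and> b < n) \<and> (\<forall>a b. E a b \<longrightarrow> E b a) \<and> (\<forall>a. \<not> E a a)"

definition inv_letter :: "letter \<Rightarrow> letter" where
  "inv_letter x = (fst x, \<not> snd x)"

definition word_over :: "nat set \<Rightarrow> letter list \<Rightarrow> bool" where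
  "word_over S w \<longleftrightarrow> (\<forall>x \<in> set w. fst x \<in> S)"

definition raag_step :: "(nat \<Rightarrow> nat \<Rightarrow> bool) \<Rightarrow> letter list \<Rightarrow> letter list \<Rightarrow> bool" where
  "raag_step E u v \<longleftrightarrow>
     (\<exists>p q x. u = p @ [x, inv_letter x] @ q \<and> v = p @ q) \<or>
     (\<exists>p q x y. E (fst x) (fst y) \<and> u = p @ [x, y] @ q \<and> v = p @ [y, x] @ q)"

definition raag_eq :: "(nat \<Rightarrow> nat \<Rightarrow> bool) \<Rightarrow> letter list \<Rightarrow> letter list \<Rightarrow> bool" where
  "raag_eq E = equivclp (raag_step E)"

definition wlen :: "nat \<Rightarrow> (nat \<Rightarrow> nat \<Rightarrow> bool) \<Rightarrow> letter list \<Rightarrow> nat" where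
  "wlen n E w = (LEAST l. \<exists>u. word_over {..<n} u \<and> length u = l \<and> raag_eq E u w)"

definition link :: "nat \<Rightarrow> (nat \<Rightarrow> nat \<Rightarrow> bool) \<Rightarrow> nat \<Rightarrow> nat set" where
  "link n E s = {t. t < n \<and> E s t}"

text \<open>Right-counting vector, 0-indexed: entry i corresponds to f_{i+1} of the paper.
  f_i = min ||y|| over y with s_i^{e_i} ... s_l^{e_l} = x s_i^{e_i} y, x in <lk(s_i)>.\<close>
definition rcount :: "nat \<Rightarrow> (nat \<Rightarrow> nat \<Rightarrow> bool) \<Rightarrow> letter list \<Rightarrow> nat \<Rightarrow> nat" where
  "rcount n E w i = (LEAST m. \<exists>x y. word_over (link n E (fst (w ! i))) x \<and> word_over {..<n} y \<and>
       raag_eq E (drop i w) (x @ [w ! i] @ y) \<and> wlen n E y = m)"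

definition canonical_expr :: "nat \<Rightarrow> (nat \<Rightarrow> nat \<Rightarrow> bool) \<Rightarrow> letter list \<Rightarrow> bool" where
  "canonical_expr n E w \<longleftrightarrow>
     word_over {..<n} w \<and> length w = wlen n E w \<and>
     (\<forall>i j. i < j \<and> j < length w \<longrightarrow> rcount n E w j \<le> rcount n E w i) \<and>
     (\<forall>i j. i < j \<and> j < length w \<and> rcount n E w i = rcount n E w j \<longrightarrow>
        fst (w ! i) < fst (w ! j) \<and>
        raag_eq E [(fst (w ! i), True), (fst (w ! j), True), (fst (w ! i), False), (fst (w ! j), False)] [])"

end

theory Submission
  imports Defs
begin

lemma equivclp_map:
  assumes "\<And>u v. r u v \<Longrightarrow> r' (f u) (f v)" and "equivclp r a b"
  shows "equivclp r' (f a) (f b)"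
  using assms(2)
proof (induction rule: equivclp_induct)
  case base then show ?case by simp
next
  case (step y z)
  then show ?case using assms(1) by (meson equivclp_into_equivclp)
qed

lemma equivclp_fun:
  assumes "\<And>u v. r u v \<Longrightarrow> f u = f v" and "equivclp r a b"
  shows "f a = f b"
  using assms(2)
proof (induction rule: equivclp_induct)
  case base then show ?case by simp
next
  case (step y z)
  then show ?case using assms(1) by metis
qed

definition sw :: "(nat \<Rightarrow> nat \<Rightarrow> bool) \<Rightarrow> letter list \<Rightarrow> letter list \<Rightarrow> bool" where
  "sw E u v \<longleftrightarrow> (\<exists>p q x y. E (fst x) (fst y) \<and> u = p @ [x, y] @ q \<and> v = p @ [y, x] @ q)"

definition ceq :: "(nat \<Rightarrow> nat \<Rightarrow> bool) \<Rightarrow> letter list \<Rightarrow> letter list \<Rightarrow> bool" where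
  "ceq E = equivclp (sw E)"

fun del :: "(nat \<Rightarrow> nat \<Rightarrow> bool) \<Rightarrow> letter \<Rightarrow> letter list \<Rightarrow> letter list option" where
  "del E x [] = None"
| "del E x (y#ys) = (if y = inv_letter x then Some ys
     else if E (fst x) (fst y) then map_option (Cons y) (del E x ys) else None)"

definition act :: "(nat \<Rightarrow> nat \<Rightarrow> bool) \<Rightarrow> letter \<Rightarrow> letter list \<Rightarrow> letter list" where
  "act E x w = (case del E x w of Some w' \<Rightarrow> w' | None \<Rightarrow> x # w)"

fun red :: "(nat \<Rightarrow> nat \<Rightarrow> bool) \<Rightarrow> letter list \<Rightarrow> bool" where
  "red E [] = True"
| "red E (x#ws) = (red E ws \<and> del E x ws = None)"

definition Phi :: "(nat \<Rightarrow> nat \<Rightarrow> bool) \<Rightarrow> letter list \<Rightarrow> letter list" where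
  "Phi E w = foldr (act E) w []"

lemma inv_inv[simp]: "inv_letter (inv_letter x) = x"
  by (simp add: inv_letter_def)
lemma fst_inv[simp]: "fst (inv_letter x) = fst x"
  by (simp add: inv_letter_def)
lemma inv_neq[simp]: "inv_letter x \<noteq> x" "x \<noteq> inv_letter x"
  by (auto simp: inv_letter_def prod_eq_iff)
lemma inv_eq_iff: "(inv_letter x = y) = (x = inv_letter y)"
  by (auto simp: inv_letter_def prod_eq_iff)

lemma ceq_refl[simp]: "ceq E u u" by (simp add: ceq_def)
lemma ceq_sym: "ceq E u v \<Longrightarrow> ceq E v u" by (simp add: ceq_def equivclp_sym)
lemma ceq_trans: "ceq E u v \<Longrightarrow> ceq E v w \<Longrightarrow> ceq E u w"
  unfolding ceq_def by (rule equivclp_trans)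

lemma sw_app: "sw E u v \<Longrightarrow> sw E (a @ u @ b) (a @ v @ b)"
  unfolding sw_def
  by (metis append.assoc)

lemma ceq_app: "ceq E u v \<Longrightarrow> ceq E (a @ u @ b) (a @ v @ b)"
  unfolding ceq_def by (rule equivclp_map[where f="\<lambda>u. a @ u @ b"], rule sw_app)

lemma ceq_Cons: "ceq E u v \<Longrightarrow> ceq E (x # u) (x # v)"
  using ceq_app[of E u v "[x]" "[]"] by simp
lemma ceq_app_left: "ceq E u v \<Longrightarrow> ceq E (a @ u) (a @ v)"
  using ceq_app[of E u v a "[]"] by simp
lemma ceq_app_right: "ceq E u v \<Longrightarrow> ceq E (u @ b) (v @ b)"
  using ceq_app[of E u v "[]" b] by simp

lemma ceq_swap: "E (fst x) (fst y) \<Longrightarrow> ceq E (p @ x # y # q) (p @ y # x # q)"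
proof -
  assume "E (fst x) (fst y)"
  then have "sw E (p @ [x, y] @ q) (p @ [y, x] @ q)" unfolding sw_def by blast
  then show ?thesis unfolding ceq_def by auto
qed

lemma ceq_swap0: "E (fst x) (fst y) \<Longrightarrow> ceq E (x # y # q) (y # x # q)"
  using ceq_swap[of E x y "[]" q] by simp

lemma ceq_length: "ceq E u v \<Longrightarrow> length u = length v"
  unfolding ceq_def by (rule equivclp_fun[where f=length]) (auto simp: sw_def)

lemma ceq_set: "ceq E u v \<Longrightarrow> set u = set v"
  unfolding ceq_def by (rule equivclp_fun[where f=set]) (auto simp: sw_def)


fun dpart :: "(nat \<Rightarrow> nat \<Rightarrow> bool) \<Rightarrow> nat set \<Rightarrow> letter list \<Rightarrow> letter list" where
  "dpart E B [] = []"
| "dpart E B (t#ts) = (if \<exists>b\<in>B. \<not> E b (fst t) then t # dpart E (insert (fst t) B) ts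
     else dpart E B ts)"

fun npart :: "(nat \<Rightarrow> nat \<Rightarrow> bool) \<Rightarrow> nat set \<Rightarrow> letter list \<Rightarrow> letter list" where
  "npart E B [] = []"
| "npart E B (t#ts) = (if \<exists>b\<in>B. \<not> E b (fst t) then npart E (insert (fst t) B) ts
     else t # npart E B ts)"

fun dB :: "(nat \<Rightarrow> nat \<Rightarrow> bool) \<Rightarrow> nat set \<Rightarrow> letter list \<Rightarrow> nat set" where
  "dB E B [] = B"
| "dB E B (t#ts) = (if \<exists>b\<in>B. \<not> E b (fst t) then dB E (insert (fst t) B) ts
     else dB E B ts)"

lemma dpart_app: "dpart E B (p @ q) = dpart E B p @ dpart E (dB E B p) q"
  by (induction p arbitrary: B) auto

lemma dB_app: "dB E B (p @ q) = dB E (dB E B p) q"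
  by (induction p arbitrary: B) auto

lemma dB_mono: "B \<subseteq> dB E B p"
  by (induction p arbitrary: B) (auto, blast+)

lemma dlen_mono: "B \<subseteq> B' \<Longrightarrow> length (dpart E B v) \<le> length (dpart E B' v)"
proof (induction v arbitrary: B B')
  case Nil then show ?case by simp
next
  case (Cons t ts)
  have i: "insert (fst t) B \<subseteq> insert (fst t) B'" using Cons.prems by blast
  show ?case
  proof (cases "\<exists>b\<in>B. \<not> E b (fst t)")
    case True
    then have "\<exists>b\<in>B'. \<not> E b (fst t)" using Cons.prems by blast
    then show ?thesis using True Cons.IH[OF i] by simp
  next
    case False
    have i2: "B \<subseteq> insert (fst t) B'" using Cons.prems by blast
    show ?thesis using False Cons.IH[OF Cons.prems] Cons.IH[OF i2] by (auto simp: le_SucI)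
  qed
qed

lemma dpart_set: "set (dpart E B v) \<subseteq> set v"
  by (induction v arbitrary: B) auto

lemma npart_set: "set (npart E B v) \<subseteq> set v"
  by (induction v arbitrary: B) auto

lemma npart_adj: "t \<in> set (npart E B v) \<Longrightarrow> \<forall>b\<in>B. E b (fst t)"
  by (induction v arbitrary: B) (auto split: if_splits)

lemma dpart_skip: "\<forall>z\<in>set m. \<forall>b\<in>B. E b (fst z) \<Longrightarrow> dpart E B (m @ t) = dpart E B t"
  by (induction m) auto


definition Dn :: "(nat \<Rightarrow> nat \<Rightarrow> bool) \<Rightarrow> letter list \<Rightarrow> nat \<Rightarrow> nat" where
  "Dn E c i = length (dpart E {fst (c ! i)} (drop (Suc i) c))"

definition cano :: "(nat \<Rightarrow> nat \<Rightarrow> bool) \<Rightarrow> letter list \<Rightarrow> bool" where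
  "cano E c \<longleftrightarrow> (\<forall>i j. i < j \<and> j < length c \<longrightarrow>
     Dn E c j \<le> Dn E c i \<and> (Dn E c i = Dn E c j \<longrightarrow> fst (c ! i) < fst (c ! j)))"

lemma Dn_Cons: "Dn E (a # r) (Suc i) = Dn E r i"
  by (simp add: Dn_def)

lemma Dn_app2: "Dn E (p @ r) (length p + k) = Dn E r k"
  by (simp add: Dn_def nth_append)

lemma Dn_app1: "k < length p \<Longrightarrow> Dn E (p @ r) k = length (dpart E {fst (p ! k)} (drop (Suc k) p @ r))"
  by (simp add: Dn_def nth_append)

lemma cano_Cons: "cano E (a # r) \<Longrightarrow> cano E r"
  unfolding cano_def
proof (intro allI impI)
  fix i j assume h: "\<forall>i j. i < j \<and> j < length (a # r) \<longrightarrow>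
      Dn E (a # r) j \<le> Dn E (a # r) i \<and>
      (Dn E (a # r) i = Dn E (a # r) j \<longrightarrow> fst ((a # r) ! i) < fst ((a # r) ! j))"
    and ij: "i < j \<and> j < length r"
  from h[rule_format, of "Suc i" "Suc j"] ij
  show "Dn E r j \<le> Dn E r i \<and> (Dn E r i = Dn E r j \<longrightarrow> fst (r ! i) < fst (r ! j))"
    by (simp add: Dn_Cons)
qed

lemma lex_lt:
  fixes N X Y a b :: nat
  assumes "a < N" "b < N"
  shows "X * N + a < Y * N + b \<longleftrightarrow> X < Y \<or> (X = Y \<and> a < b)"
proof -
  show ?thesis
  proof
    assume h: "X * N + a < Y * N + b"
    show "X < Y \<or> (X = Y \<and> a < b)"
    proof (rule ccontr)
      assume "\<not> (X < Y \<or> X = Y \<and> a < b)"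
      then have "Y < X \<or> (X = Y \<and> b \<le> a)" by auto
      then show False
      proof
        assume "Y < X"
        have "Suc Y * N \<le> X * N" using \<open>Y < X\<close> by (intro mult_le_mono1) simp
        then show False using h assms by simp
      qed (use h in simp)
    qed
  next
    assume "X < Y \<or> (X = Y \<and> a < b)"
    then show "X * N + a < Y * N + b"
    proof
      assume "X < Y"
      have "Suc X * N \<le> Y * N" using \<open>X < Y\<close> by (intro mult_le_mono1) simp
      then show ?thesis using assms by simp
    qed simp
  qed
qed

lemma lex_eq:
  fixes N X Y a b :: nat
  assumes "a < N" "b < N" "X * N + a = Y * N + b"
  shows "X = Y \<and> a = b"
  using lex_lt[where N=N and X=X and Y=Y and a=a and b=b, OF assms(1,2)]
    lex_lt[where N=N and X=Y and Y=X and a=b and b=a, OF assms(2,1)] assms(3) by auto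

definition gk :: "(nat \<Rightarrow> nat \<Rightarrow> bool) \<Rightarrow> nat \<Rightarrow> letter list \<Rightarrow> nat \<Rightarrow> nat" where
  "gk E n c k = Dn E c k * Suc n + (n - fst (c ! k))"

definition lcano :: "(nat \<Rightarrow> nat \<Rightarrow> bool) \<Rightarrow> nat \<Rightarrow> letter list \<Rightarrow> bool" where
  "lcano E n c \<longleftrightarrow> (\<forall>i. Suc i < length c \<longrightarrow> gk E n c (Suc i) < gk E n c i)"

definition mu :: "(nat \<Rightarrow> nat \<Rightarrow> bool) \<Rightarrow> nat \<Rightarrow> letter list \<Rightarrow> nat" where
  "mu E n c = (\<Sum>k<length c. k * gk E n c k)"

lemma lcano_trans: "lcano E n c \<Longrightarrow> i < j \<Longrightarrow> j < length c \<Longrightarrow> gk E n c j < gk E n c i"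
proof (induction j)
  case 0 then show ?case by simp
next
  case (Suc j)
  have "gk E n c (Suc j) < gk E n c j" using Suc.prems unfolding lcano_def by blast
  then show ?case using Suc by (cases "i = j") auto
qed

locale RG =
  fixes E :: "nat \<Rightarrow> nat \<Rightarrow> bool"
  assumes symE: "E a b \<Longrightarrow> E b a" and irrE: "\<not> E a a"
begin

lemma ceq_move:
  assumes "\<forall>z\<in>set m. E (fst t) (fst z)"
  shows "ceq E (m @ t # r) (t # m @ r)"
  using assms
proof (induction m)
  case Nil then show ?case by simp
next
  case (Cons z m)
  have "ceq E (z # m @ t # r) (z # t # m @ r)" using Cons by (simp add: ceq_Cons)
  moreover have "ceq E (z # t # m @ r) (t # z # m @ r)"
    using Cons.prems by (intro ceq_swap0) (auto intro: symE)
  ultimately show ?case by (simp add: ceq_trans)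
qed

lemma del_struct:
  assumes "del E x w = Some w'"
  shows "\<exists>m t. w = m @ inv_letter x # t \<and> w' = m @ t \<and> (\<forall>z\<in>set m. E (fst x) (fst z))"
  using assms
proof (induction w arbitrary: w')
  case Nil then show ?case by simp
next
  case (Cons y ys)
  show ?case
  proof (cases "y = inv_letter x")
    case True then show ?thesis using Cons.prems by (intro exI[of _ "[]"] exI[of _ ys]) auto
  next
    case False
    with Cons.prems obtain ys' where e: "E (fst x) (fst y)" "del E x ys = Some ys'" "w' = y # ys'"
      by (auto split: if_splits)
    from Cons.IH[OF e(2)] obtain m t where "ys = m @ inv_letter x # t" "ys' = m @ t"
      "\<forall>z\<in>set m. E (fst x) (fst z)" by blast
    then show ?thesis using e by (intro exI[of _ "y # m"] exI[of _ t]) auto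
  qed
qed

lemma del_ceq_Some:
  assumes "del E x w = Some w'"
  shows "ceq E w (inv_letter x # w')"
proof -
  obtain m t where "w = m @ inv_letter x # t" "w' = m @ t" "\<forall>z\<in>set m. E (fst x) (fst z)"
    using del_struct[OF assms] by blast
  then show ?thesis using ceq_move[of m "inv_letter x" t] by simp
qed

lemma del_len: "del E x w = Some w' \<Longrightarrow> length w = Suc (length w')"
  using del_struct by fastforce

lemma del_set: "del E x w = Some w' \<Longrightarrow> set w' \<subseteq> set w"
  using del_struct by fastforce

lemma del_app_comm:
  assumes "\<forall>z\<in>set m. E (fst x) (fst z)"
  shows "del E x (m @ t) = map_option ((@) m) (del E x t)"
  using assms
proof (induction m)
  case Nil then show ?case by (simp add: option.map_ident)
next
  case (Cons z m)
  have "z \<noteq> inv_letter x" using Cons.prems irrE by (metis fst_inv list.set_intros(1))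
  then show ?case using Cons by (simp add: option.map_comp comp_def)
qed

lemma del_None_app:
  assumes "del E x q = None"
  shows "del E x (r @ q) = None \<or> (\<exists>r'. del E x (r @ q) = Some (r' @ q))"
  using assms
proof (induction r)
  case Nil then show ?case by simp
next
  case (Cons z r)
  then show ?case by auto
qed

lemma rel_option_ceq_trans:
  "rel_option (ceq E) a b \<Longrightarrow> rel_option (ceq E) b c \<Longrightarrow> rel_option (ceq E) a c"
  by (cases a; cases b; cases c) (auto intro: ceq_trans)

lemma rel_option_ceq_sym:
  "rel_option (ceq E) a b \<Longrightarrow> rel_option (ceq E) b a"
  by (cases a; cases b) (auto intro: ceq_sym)

lemma del_swap:
  assumes ab: "E (fst a) (fst b)"
  shows "rel_option (ceq E) (del E x (p @ a # b # q)) (del E x (p @ b # a # q))"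
proof (induction p)
  case Nil
  have nab: "fst a \<noteq> fst b" using ab irrE by metis
  show ?case
  proof (cases "a = inv_letter x")
    case True
    then have "b \<noteq> inv_letter x" "E (fst x) (fst b)" using nab ab by auto
    then show ?thesis using True by simp
  next
    case F1: False
    show ?thesis
    proof (cases "b = inv_letter x")
      case True
      then have "E (fst x) (fst a)" using nab ab symE by auto
      then show ?thesis using True F1 by simp
    next
      case False
      then show ?thesis using F1
        by (cases "del E x q") (auto intro: ceq_swap0[of E a b, OF ab])
    qed
  qed
next
  case (Cons z p)
  show ?case
  proof (cases "z = inv_letter x")
    case True then show ?thesis
      using ceq_swap[of E a b p q, OF ab] by simp
  next
    case False
    then show ?thesis using Cons
      by (cases "del E x (p @ a # b # q)"; cases "del E x (p @ b # a # q)")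
         (auto intro: ceq_Cons)
  qed
qed

lemma del_sw: "sw E u v \<Longrightarrow> rel_option (ceq E) (del E x u) (del E x v)"
  unfolding sw_def using del_swap by fastforce

lemma del_ceq: "ceq E u v \<Longrightarrow> rel_option (ceq E) (del E x u) (del E x v)"
  unfolding ceq_def
proof (induction rule: equivclp_induct)
  case base
  then show ?case by (cases "del E x u") (auto simp: ceq_def[symmetric])
next
  case (step y z)
  then have "rel_option (ceq E) (del E x y) (del E x z)"
    using del_sw rel_option_ceq_sym by blast
  then show ?case using step(3) rel_option_ceq_trans unfolding ceq_def by blast
qed

lemma act_ceq: "ceq E u v \<Longrightarrow> ceq E (act E x u) (act E x v)"
  using del_ceq[of u v x] unfolding act_def
  by (cases "del E x u"; cases "del E x v") (auto intro: ceq_Cons)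

lemma foldr_act_ceq: "ceq E r r' \<Longrightarrow> ceq E (foldr (act E) p r) (foldr (act E) p r')"
  by (induction p) (auto intro: act_ceq)

lemma del_None_pres:
  assumes "del E y ys = None" "del E x ys = Some ys'" "E (fst x) (fst y)"
  shows "del E y ys' = None"
  using assms
proof (induction ys arbitrary: ys')
  case Nil then show ?case by simp
next
  case (Cons z zs)
  have zy: "z \<noteq> inv_letter y" using Cons.prems(1) by auto
  show ?case
  proof (cases "z = inv_letter x")
    case True
    then have "E (fst y) (fst z)" using Cons.prems(3) symE by simp
    then show ?thesis using Cons.prems True zy by auto
  next
    case False
    then obtain zs' where "E (fst x) (fst z)" "del E x zs = Some zs'" "ys' = z # zs'"
      using Cons.prems(2) by (auto split: if_splits)
    then show ?thesis using Cons zy by (cases "E (fst y) (fst z)") auto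
  qed
qed

lemma red_del: "red E w \<Longrightarrow> del E x w = Some w' \<Longrightarrow> red E w'"
proof (induction w arbitrary: w')
  case Nil then show ?case by simp
next
  case (Cons y ys)
  show ?case
  proof (cases "y = inv_letter x")
    case True then show ?thesis using Cons by simp
  next
    case False
    then obtain ys' where e: "E (fst x) (fst y)" "del E x ys = Some ys'" "w' = y # ys'"
      using Cons.prems by (auto split: if_splits)
    then show ?thesis using Cons del_None_pres[of y ys x ys'] by auto
  qed
qed

lemma red_act: "red E w \<Longrightarrow> red E (act E x w)"
  unfolding act_def using red_del by (cases "del E x w") auto

lemma red_Phi: "red E (Phi E w)"
  unfolding Phi_def by (induction w) (auto intro: red_act)

lemma Phi_red: "red E w \<Longrightarrow> Phi E w = w"
  unfolding Phi_def by (induction w) (auto simp: act_def)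

lemma Phi_Cons: "Phi E (x # w) = act E x (Phi E w)"
  by (simp add: Phi_def)

lemma act_len_le: "length (act E x w) \<le> Suc (length w)"
  unfolding act_def by (cases "del E x w") (auto dest: del_len)

lemma Phi_len: "length (Phi E w) \<le> length w"
proof (induction w)
  case Nil then show ?case by (simp add: Phi_def)
next
  case (Cons x w)
  then show ?case using act_len_le[of x "Phi E w"] by (simp add: Phi_Cons)
qed

lemma Phi_len_eq: "length (Phi E w) = length w \<Longrightarrow> Phi E w = w"
proof (induction w)
  case Nil then show ?case by (simp add: Phi_def)
next
  case (Cons x w)
  show ?case
  proof (cases "del E x (Phi E w)")
    case None
    then have "length (Phi E w) = length w" using Cons.prems by (simp add: Phi_Cons act_def)
    then show ?thesis using Cons None by (simp add: Phi_Cons act_def)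
  next
    case (Some a)
    then have "length (Phi E (x # w)) < length (x # w)"
      using del_len[OF Some] Phi_len[of w] by (simp add: Phi_Cons act_def)
    then show ?thesis using Cons.prems by simp
  qed
qed

lemma red_iff_len: "red E w \<longleftrightarrow> length (Phi E w) = length w"
  using Phi_red Phi_len_eq red_Phi by metis

lemma Phi_set: "set (Phi E w) \<subseteq> set w"
proof (induction w)
  case Nil then show ?case by (simp add: Phi_def)
next
  case (Cons x w)
  then show ?case unfolding Phi_Cons act_def
    by (cases "del E x (Phi E w)") (auto dest: del_set)
qed

lemma red_drop: "red E (m @ r) \<Longrightarrow> red E r"
  by (induction m) auto

lemma R3:
  assumes "red E w"
  shows "ceq E (act E x (act E (inv_letter x) w)) w"
proof (cases "del E (inv_letter x) w")
  case None
  then show ?thesis by (simp add: act_def)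
next
  case (Some w')
  obtain m t where mt: "w = m @ x # t" "w' = m @ t" "\<forall>z\<in>set m. E (fst x) (fst z)"
    using del_struct[OF Some] by auto
  have "red E (x # t)" using assms mt red_drop by metis
  then have "del E x t = None" by simp
  then have "del E x w' = None" using del_app_comm[OF mt(3), of t] mt by simp
  then have "act E x (act E (inv_letter x) w) = x # m @ t" using Some mt by (simp add: act_def)
  then show ?thesis using ceq_move[OF mt(3), of t] mt ceq_sym by metis
qed

lemma R4:
  assumes xy: "E (fst x) (fst y)"
  shows "ceq E (act E x (act E y w)) (act E y (act E x w))"
proof -
  have yx: "E (fst y) (fst x)" using xy symE by blast
  have nxy: "fst x \<noteq> fst y" using xy irrE by metis
  have i1: "inv_letter y \<noteq> inv_letter x" "y \<noteq> inv_letter x" "x \<noteq> inv_letter y"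
    using nxy by (metis fst_inv)+
  show ?thesis
  proof (cases "del E y w")
    case N1: None
    show ?thesis
    proof (cases "del E x w")
      case None
      then show ?thesis using N1 i1 xy yx by (simp add: act_def ceq_swap0)
    next
      case (Some w2)
      have c: "ceq E w (inv_letter x # w2)" using del_ceq_Some[OF Some] .
      have "rel_option (ceq E) (del E y w) (del E y (inv_letter x # w2))" using del_ceq[OF c] .
      then have "del E y w2 = None" using N1 i1 yx by (cases "del E y w2") auto
      then show ?thesis using N1 Some i1 xy yx by (simp add: act_def)
    qed
  next
    case (Some w1)
    have c1: "ceq E w (inv_letter y # w1)" using del_ceq_Some[OF Some] .
    have r1: "rel_option (ceq E) (del E x w) (map_option (Cons (inv_letter y)) (del E x w1))"
      using del_ceq[OF c1, of x] i1 xy by simp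
    show ?thesis
    proof (cases "del E x w")
      case None
      then have "del E x w1 = None" using r1 by (cases "del E x w1") auto
      then show ?thesis using None Some i1 xy yx by (simp add: act_def)
    next
      case Some2: (Some w2)
      obtain w3 where w3: "del E x w1 = Some w3" "ceq E w2 (inv_letter y # w3)"
        using r1 Some2 by (cases "del E x w1") auto
      have "rel_option (ceq E) (del E y w2) (del E y (inv_letter y # w3))"
        using del_ceq[OF w3(2)] .
      then obtain w4 where w4: "del E y w2 = Some w4" "ceq E w4 w3"
        by (cases "del E y w2") auto
      show ?thesis using Some Some2 w3 w4 by (simp add: act_def ceq_sym)
    qed
  qed
qed

lemma raag_refl[simp]: "raag_eq E u u" by (simp add: raag_eq_def)
lemma raag_sym: "raag_eq E u v \<Longrightarrow> raag_eq E v u" by (simp add: raag_eq_def equivclp_sym)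
lemma raag_trans: "raag_eq E u v \<Longrightarrow> raag_eq E v w \<Longrightarrow> raag_eq E u w"
  unfolding raag_eq_def by (rule equivclp_trans)

lemma raag_step_app: "raag_step E u v \<Longrightarrow> raag_step E (a @ u @ b) (a @ v @ b)"
  unfolding raag_step_def by (metis append.assoc)

lemma raag_app: "raag_eq E u v \<Longrightarrow> raag_eq E (a @ u @ b) (a @ v @ b)"
  unfolding raag_eq_def by (rule equivclp_map[where f="\<lambda>u. a @ u @ b"], rule raag_step_app)

lemma raag_app_left: "raag_eq E u v \<Longrightarrow> raag_eq E (a @ u) (a @ v)"
  using raag_app[of u v a "[]"] by simp
lemma raag_app_right: "raag_eq E u v \<Longrightarrow> raag_eq E (u @ b) (v @ b)"
  using raag_app[of u v "[]" b] by simp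

lemma ceq_raag: "ceq E u v \<Longrightarrow> raag_eq E u v"
  unfolding ceq_def raag_eq_def
  by (rule equivclp_map[where f="\<lambda>u. u"]) (auto simp: sw_def raag_step_def)

lemma raag_cancel: "raag_eq E (a @ x # inv_letter x # b) (a @ b)"
proof -
  have "raag_step E (a @ [x, inv_letter x] @ b) (a @ b)" unfolding raag_step_def by blast
  then show ?thesis unfolding raag_eq_def by auto
qed

lemma raag_cancel0: "raag_eq E (x # inv_letter x # b) b"
  using raag_cancel[of "[]" x b] by simp

lemma act_raag: "raag_eq E (act E x r) (x # r)"
proof (cases "del E x r")
  case None then show ?thesis by (simp add: act_def)
next
  case (Some r')
  have "raag_eq E (x # r) (x # inv_letter x # r')"
    using ceq_raag[OF del_ceq_Some[OF Some]] raag_app_left[of _ _ "[x]"] by simp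
  moreover have "raag_eq E (x # inv_letter x # r') r'" by (rule raag_cancel0)
  ultimately have "raag_eq E (x # r) r'" by (rule raag_trans)
  then show ?thesis using Some by (simp add: act_def raag_sym)
qed

lemma raag_Cons: "raag_eq E u v \<Longrightarrow> raag_eq E (x # u) (x # v)"
  using raag_app_left[of u v "[x]"] by simp

lemma Phi_raag: "raag_eq E (Phi E w) w"
proof (induction w)
  case Nil then show ?case by (simp add: Phi_def)
next
  case (Cons x w)
  then show ?case using act_raag[of x "Phi E w"] raag_Cons[OF Cons.IH, of x]
    by (simp add: Phi_Cons raag_trans)
qed

lemma Phi_app: "Phi E (p @ q) = foldr (act E) p (Phi E q)"
  by (simp add: Phi_def)

lemma Phi_step: "raag_step E u v \<Longrightarrow> ceq E (Phi E u) (Phi E v)"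
  unfolding raag_step_def
proof (elim disjE exE conjE)
  fix p q x assume "u = p @ [x, inv_letter x] @ q" "v = p @ q"
  then show ?thesis using R3[OF red_Phi, of x q] foldr_act_ceq
    by (simp add: Phi_app Phi_Cons)
next
  fix p q x y assume "E (fst x) (fst y)" "u = p @ [x, y] @ q" "v = p @ [y, x] @ q"
  then show ?thesis using R4 foldr_act_ceq by (simp add: Phi_app Phi_Cons)
qed

lemma Phi_eq: "raag_eq E u v \<Longrightarrow> ceq E (Phi E u) (Phi E v)"
  unfolding raag_eq_def
proof (induction rule: equivclp_induct)
  case base then show ?case by simp
next
  case (step y z)
  then show ?case using Phi_step ceq_sym ceq_trans by blast
qed

lemma red_ceq: "red E u \<Longrightarrow> ceq E u v \<Longrightarrow> red E v"
proof -
  assume r: "red E u" and c: "ceq E u v"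
  have "ceq E (Phi E u) (Phi E v)" using Phi_eq[OF ceq_raag[OF c]] .
  then have "length (Phi E v) = length v" using Phi_red[OF r] ceq_length c by metis
  then show ?thesis using red_iff_len by blast
qed

lemma red_raag_ceq: "red E u \<Longrightarrow> red E v \<Longrightarrow> raag_eq E u v \<Longrightarrow> ceq E u v"
  using Phi_eq Phi_red by metis

lemma word_over_Phi: "word_over S w \<Longrightarrow> word_over S (Phi E w)"
  using Phi_set unfolding word_over_def by blast

lemma wlen_Phi:
  assumes "word_over {..<n} w"
  shows "wlen n E w = length (Phi E w)"
  unfolding wlen_def
proof (rule Least_equality)
  show "\<exists>u. word_over {..<n} u \<and> length u = length (Phi E w) \<and> raag_eq E u w"
    using assms word_over_Phi Phi_raag by blast
next
  fix l assume "\<exists>u. word_over {..<n} u \<and> length u = l \<and> raag_eq E u w"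
  then obtain u where u: "length u = l" "raag_eq E u w" by blast
  have "length (Phi E u) = length (Phi E w)" using Phi_eq[OF u(2)] ceq_length by blast
  then show "length (Phi E w) \<le> l" using Phi_len[of u] u by simp
qed

lemma wlen_raag:
  assumes "word_over {..<n} w" "raag_eq E w v"
  shows "wlen n E w = length (Phi E v)"
  using wlen_Phi[OF assms(1)] Phi_eq[OF assms(2)] ceq_length by metis

lemma red_geod: "word_over {..<n} w \<Longrightarrow> red E w \<longleftrightarrow> length w = wlen n E w"
  using wlen_Phi red_iff_len by metis

lemma dpart_swap2:
  assumes "E (fst x) (fst y)"
  shows "length (dpart E B [x, y]) = length (dpart E B [y, x]) \<and> dB E B [x, y] = dB E B [y, x]"
proof -
  have xy: "\<not> E (fst x) (fst y) = False" "\<not> E (fst y) (fst x) = False" using assms symE by auto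
  show ?thesis using xy by (auto simp: insert_commute)
qed

lemma dpart_sw: "sw E u v \<Longrightarrow> (length (dpart E B u), dB E B u) = (length (dpart E B v), dB E B v)"
  unfolding sw_def
proof (elim exE conjE)
  fix p q x y assume a: "E (fst x) (fst y)" "u = p @ [x, y] @ q" "v = p @ [y, x] @ q"
  have h: "length (dpart E (dB E B p) [x, y]) = length (dpart E (dB E B p) [y, x])"
     "dB E (dB E B p) [x, y] = dB E (dB E B p) [y, x]"
    using dpart_swap2[OF a(1), of "dB E B p"] by auto
  have "dpart E B u = dpart E B p @ dpart E (dB E B p) [x, y] @ dpart E (dB E (dB E B p) [x, y]) q"
    using a(2) dpart_app[of E B p "[x,y] @ q"] dpart_app[of E "dB E B p" "[x,y]" q] by simp
  moreover have "dpart E B v = dpart E B p @ dpart E (dB E B p) [y, x] @ dpart E (dB E (dB E B p) [y, x]) q"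
    using a(3) dpart_app[of E B p "[y,x] @ q"] dpart_app[of E "dB E B p" "[y,x]" q] by simp
  moreover have "dB E B u = dB E (dB E (dB E B p) [x, y]) q"
    using a(2) dB_app[of E B p "[x,y] @ q"] dB_app[of E "dB E B p" "[x,y]" q] by simp
  moreover have "dB E B v = dB E (dB E (dB E B p) [y, x]) q"
    using a(3) dB_app[of E B p "[y,x] @ q"] dB_app[of E "dB E B p" "[y,x]" q] by simp
  ultimately show ?thesis using h by simp
qed

lemma dpart_ceq:
  assumes "ceq E u v"
  shows "length (dpart E B u) = length (dpart E B v)" "dB E B u = dB E B v"
proof -
  have "(length (dpart E B u), dB E B u) = (length (dpart E B v), dB E B v)"
    using assms unfolding ceq_def
    by (rule equivclp_fun[where f="\<lambda>u. (length (dpart E B u), dB E B u)", rotated]) (rule dpart_sw)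
  then show "length (dpart E B u) = length (dpart E B v)" "dB E B u = dB E B v" by auto
qed

lemma ceq_split: "\<forall>z\<in>set p. fst z \<in> B \<Longrightarrow> ceq E (p @ v) (npart E B v @ p @ dpart E B v)"
proof (induction v arbitrary: p B)
  case Nil then show ?case by simp
next
  case (Cons t ts)
  show ?case
  proof (cases "\<exists>b\<in>B. \<not> E b (fst t)")
    case True
    have "\<forall>z\<in>set (p @ [t]). fst z \<in> insert (fst t) B" using Cons.prems by auto
    from Cons.IH[OF this] show ?thesis using True by simp
  next
    case False
    then have "\<forall>z\<in>set p. E (fst t) (fst z)" using Cons.prems symE by blast
    then have "ceq E (p @ t # ts) (t # p @ ts)" by (rule ceq_move)
    moreover have "ceq E (t # p @ ts) (t # npart E B ts @ p @ dpart E B ts)"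
      using Cons.IH[OF Cons.prems] by (rule ceq_Cons)
    ultimately show ?thesis using False by (simp add: ceq_trans)
  qed
qed

lemma del_dpart_None: "\<forall>b\<in>B. E b (fst t) \<Longrightarrow> del E t (dpart E B v) = None"
proof (induction v arbitrary: B)
  case Nil then show ?case by simp
next
  case (Cons x xs)
  show ?case
  proof (cases "\<exists>b\<in>B. \<not> E b (fst x)")
    case True
    have "x \<noteq> inv_letter t" using True Cons.prems by auto
    moreover have "E (fst t) (fst x) \<Longrightarrow> \<forall>b\<in>insert (fst x) B. E b (fst t)"
      using Cons.prems symE by auto
    ultimately show ?thesis using True Cons.IH by auto
  next
    case False
    then show ?thesis using Cons by simp
  qed
qed

lemma foldr_act_suffix:
  assumes "\<And>t. t \<in> set z \<Longrightarrow> del E t q = None"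
  shows "\<exists>r. foldr (act E) z q = r @ q"
  using assms
proof (induction z)
  case Nil then show ?case by simp
next
  case (Cons a z)
  then obtain r where r: "foldr (act E) z q = r @ q" by auto
  have "del E a q = None" using Cons.prems by simp
  have eq: "foldr (act E) (a # z) q = act E a (r @ q)" using r by simp
  from del_None_app[OF \<open>del E a q = None\<close>, of r] show ?case
  proof
    assume "del E a (r @ q) = None"
    then have "act E a (r @ q) = (a # r) @ q" by (simp add: act_def)
    then show ?thesis using eq by metis
  next
    assume "\<exists>r'. del E a (r @ q) = Some (r' @ q)"
    then obtain r' where "del E a (r @ q) = Some (r' @ q)" by blast
    then have "act E a (r @ q) = r' @ q" by (simp add: act_def)
    then show ?thesis using eq by metis
  qed
qed

lemma raag_inv: "raag_eq E (rev (map inv_letter x) @ x) []"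
proof (induction x)
  case Nil then show ?case by simp
next
  case (Cons a x)
  have "raag_eq E (rev (map inv_letter x) @ inv_letter a # inv_letter (inv_letter a) # x)
                  (rev (map inv_letter x) @ x)" by (rule raag_cancel)
  then show ?case using Cons raag_trans by fastforce
qed

lemma red_drop_n: "red E c \<Longrightarrow> red E (drop i c)"
  using red_drop[of "take i c" "drop i c"] by simp

lemma rcount_D:
  assumes wo: "word_over {..<n} c" and rc: "red E c" and i: "i < length c"
  shows "rcount n E c i = length (dpart E {fst (c ! i)} (drop (Suc i) c))"
proof -
  define s where "s = c ! i"
  define v where "v = drop (Suc i) c"
  define N where "N = npart E {fst s} v"
  define Dl where "Dl = dpart E {fst s} v"
  have u: "drop i c = s # v" using i by (simp add: s_def v_def Cons_nth_drop_Suc)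
  have cu: "ceq E (s # v) (N @ [s] @ Dl)"
    using ceq_split[of "[s]" "{fst s}" v] by (simp add: N_def Dl_def)
  have ru: "red E (s # v)" using red_drop_n[OF rc, of i] u by simp
  have rD: "red E Dl" using red_ceq[OF ru cu] red_drop[of "N @ [s]" Dl] by simp
  have vsub: "set v \<subseteq> set c" unfolding v_def by (rule set_drop_subset)
  have woD: "word_over {..<n} Dl" using wo vsub dpart_set[of E "{fst s}" v]
    unfolding word_over_def Dl_def by blast
  have woN: "word_over (link n E (fst s)) N"
    unfolding word_over_def link_def
  proof
    fix t assume t: "t \<in> set N"
    then have "t \<in> set c" using npart_set vsub unfolding N_def by blast
    then have "fst t < n" using wo unfolding word_over_def by auto
    moreover have "E (fst s) (fst t)" using npart_adj[of t E "{fst s}" v] t by (simp add: N_def)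
    ultimately show "fst t \<in> {t. t < n \<and> E (fst (s)) t}" by simp
  qed
  have wD: "wlen n E Dl = length Dl" using wlen_Phi[OF woD] Phi_red[OF rD] by simp
  show ?thesis
    unfolding rcount_def s_def[symmetric] v_def[symmetric] Dl_def[symmetric]
  proof (rule Least_equality)
    show "\<exists>x y. word_over (link n E (fst s)) x \<and> word_over {..<n} y \<and>
        raag_eq E (drop i c) (x @ [s] @ y) \<and> wlen n E y = length Dl"
    proof -
      have "raag_eq E (drop i c) (N @ [s] @ Dl)" using ceq_raag[OF cu] u by simp
      then show ?thesis using woN woD wD by blast
    qed
  next
    fix m assume "\<exists>x y. word_over (link n E (fst s)) x \<and> word_over {..<n} y \<and>
        raag_eq E (drop i c) (x @ [s] @ y) \<and> wlen n E y = m"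
    then obtain x y where xy: "word_over (link n E (fst s)) x" "word_over {..<n} y"
        "raag_eq E (s # v) (x @ [s] @ y)" "wlen n E y = m" using u by auto
    define xi where "xi = rev (map inv_letter x)"
    have xadj: "\<forall>a\<in>set x. E (fst s) (fst a)" using xy(1) unfolding word_over_def link_def by auto
    have zadj: "\<forall>a\<in>set (xi @ N). E (fst s) (fst a)"
      using xadj woN unfolding xi_def word_over_def link_def by auto
    have e1: "raag_eq E (s # y) (xi @ x @ s # y)"
      using raag_app_right[OF raag_inv[of x], of "s # y"] raag_sym unfolding xi_def by simp
    have e2: "raag_eq E (xi @ x @ s # y) (xi @ N @ s # Dl)"
    proof -
      have "raag_eq E (x @ s # y) (N @ s # Dl)"
        using raag_trans[OF raag_sym[OF xy(3)] ceq_raag[OF cu]] by simp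
      then show ?thesis using raag_app_left by blast
    qed
    have e3: "raag_eq E y (inv_letter s # s # y)"
      using raag_cancel0[of "inv_letter s" y] raag_sym by simp
    have e4: "raag_eq E (inv_letter s # s # y) (inv_letter s # xi @ N @ s # Dl)"
      using raag_Cons[OF raag_trans[OF e1 e2]] raag_Cons by simp
    have e5: "raag_eq E (inv_letter s # xi @ N @ s # Dl) (inv_letter s # s # xi @ N @ Dl)"
      using ceq_raag[OF ceq_Cons[OF ceq_move[OF zadj, of Dl]]] by simp
    have e6: "raag_eq E (inv_letter s # s # xi @ N @ Dl) (xi @ N @ Dl)"
      using raag_cancel0[of "inv_letter s" "xi @ N @ Dl"] by simp
    have ey: "raag_eq E y ((xi @ N) @ Dl)"
      using raag_trans[OF e3 raag_trans[OF e4 raag_trans[OF e5 e6]]] by simp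
    have "wlen n E y = length (Phi E ((xi @ N) @ Dl))" by (rule wlen_raag[OF xy(2) ey])
    also have "Phi E ((xi @ N) @ Dl) = foldr (act E) (xi @ N) Dl"
      by (simp add: Phi_app Phi_red[OF rD])
    finally have wy: "wlen n E y = length (foldr (act E) (xi @ N) Dl)" .
    have "\<And>t. t \<in> set (xi @ N) \<Longrightarrow> del E t Dl = None"
      unfolding Dl_def using zadj by (intro del_dpart_None) auto
    then obtain r where "foldr (act E) (xi @ N) Dl = r @ Dl" using foldr_act_suffix by blast
    then show "length Dl \<le> m" using wy xy(4) by simp
  qed
qed

lemma ceq_cancel: "ceq E (a # u) (a # v) \<Longrightarrow> ceq E u v"
  using del_ceq[of "a # u" "a # v" "inv_letter a"] by simp

lemma levi:
  assumes c: "ceq E (a # u) (b # v)" and ab: "a \<noteq> b"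
  shows "\<exists>m t. v = m @ a # t \<and> (\<forall>z\<in>set m. E (fst a) (fst z)) \<and> E (fst a) (fst b) \<and>
     ceq E u (b # m @ t)"
proof -
  have r: "rel_option (ceq E) (Some u) (del E (inv_letter a) (b # v))"
    using del_ceq[OF c, of "inv_letter a"] by simp
  then obtain w where w: "del E (inv_letter a) (b # v) = Some w" "ceq E u w"
    by (cases "del E (inv_letter a) (b # v)") auto
  have bn: "b \<noteq> inv_letter (inv_letter a)" using ab by simp
  then obtain v1 where v1: "E (fst a) (fst b)" "del E (inv_letter a) v = Some v1" "w = b # v1"
    using w(1) by (auto split: if_splits)
  obtain m t where "v = m @ a # t" "v1 = m @ t" "\<forall>z\<in>set m. E (fst a) (fst z)"
    using del_struct[OF v1(2)] by auto
  then show ?thesis using v1 w by auto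
qed

lemma uniq: "ceq E c1 c2 \<Longrightarrow> cano E c1 \<Longrightarrow> cano E c2 \<Longrightarrow> c1 = c2"
proof (induction c1 arbitrary: c2)
  case Nil then show ?case using ceq_length by fastforce
next
  case (Cons a r1)
  obtain b r2 where c2: "c2 = b # r2" using ceq_length[OF Cons.prems(1)] by (cases c2) auto
  show ?case
  proof (cases "a = b")
    case True
    then have "ceq E r1 r2" using Cons.prems(1) c2 ceq_cancel by simp
    then show ?thesis using Cons.IH cano_Cons Cons.prems True c2 by metis
  next
    case False
    obtain m t where mt: "r2 = m @ a # t" "\<forall>z\<in>set m. E (fst a) (fst z)" "E (fst a) (fst b)"
      "ceq E r1 (b # m @ t)"
      using levi[OF Cons.prems(1)[unfolded c2] False] by blast
    obtain m' t' where mt': "r1 = m' @ b # t'" "\<forall>z\<in>set m'. E (fst b) (fst z)"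
      "ceq E r2 (a # m' @ t')"
      using levi[OF ceq_sym[OF Cons.prems(1)[unfolded c2]]] False by metis
    have ba: "E (fst b) (fst a)" using mt(3) symE by blast
    have d1: "Dn E (a # r1) 0 = length (dpart E {fst a} t)"
    proof -
      have "Dn E (a # r1) 0 = length (dpart E {fst a} (b # m @ t))"
        unfolding Dn_def using dpart_ceq(1)[OF mt(4)] by simp
      also have "\<dots> = length (dpart E {fst a} t)"
        using dpart_skip[where m="b # m" and B="{fst a}" and t=t and E=E] mt(2,3) by simp
      finally show ?thesis .
    qed
    have d2: "Dn E (b # r2) 0 = length (dpart E {fst b} t')"
    proof -
      have "Dn E (b # r2) 0 = length (dpart E {fst b} (a # m' @ t'))"
        unfolding Dn_def using dpart_ceq(1)[OF mt'(3)] by simp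
      also have "\<dots> = length (dpart E {fst b} t')"
        using dpart_skip[where m="a # m'" and B="{fst b}" and t=t' and E=E] mt'(2) ba by simp
      finally show ?thesis .
    qed
    have d3: "Dn E (b # r2) (Suc (length m)) = length (dpart E {fst a} t)"
      using Dn_app2[where E=E and p="b # m" and r="a # t" and k=0] mt(1) by (simp add: Dn_def)
    have d4: "Dn E (a # r1) (Suc (length m')) = length (dpart E {fst b} t')"
      using Dn_app2[where E=E and p="a # m'" and r="b # t'" and k=0] mt'(1) by (simp add: Dn_def)
    have n1: "(a # r1) ! Suc (length m') = b" using mt'(1) by (simp add: nth_append)
    have n2: "(b # r2) ! Suc (length m) = a" using mt(1) by (simp add: nth_append)
    have l1: "0 < Suc (length m') \<and> Suc (length m') < length (a # r1)" using mt'(1) by simp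
    have l2: "0 < Suc (length m) \<and> Suc (length m) < length (b # r2)" using mt(1) by simp
    have A1: "Dn E (a # r1) (Suc (length m')) \<le> Dn E (a # r1) 0 \<and>
       (Dn E (a # r1) 0 = Dn E (a # r1) (Suc (length m')) \<longrightarrow>
         fst ((a # r1) ! 0) < fst ((a # r1) ! Suc (length m')))"
      using Cons.prems(2) l1 unfolding cano_def by blast
    have A2: "Dn E (b # r2) (Suc (length m)) \<le> Dn E (b # r2) 0 \<and>
       (Dn E (b # r2) 0 = Dn E (b # r2) (Suc (length m)) \<longrightarrow>
         fst ((b # r2) ! 0) < fst ((b # r2) ! Suc (length m)))"
      using Cons.prems(3) l2 unfolding cano_def c2 by blast
    show ?thesis using A1 A2 d1 d2 d3 d4 n1 n2 by auto
  qed
qed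

lemma Dn_dep:
  assumes ij: "i < j" "j < length c" and nd: "\<not> E (fst (c ! i)) (fst (c ! j))"
  shows "Dn E c j < Dn E c i"
proof -
  define m where "m = take (j - Suc i) (drop (Suc i) c)"
  define t where "t = drop (Suc j) c"
  have "drop (j - Suc i) (drop (Suc i) c) = drop j c" using ij by simp
  also have "\<dots> = c ! j # t" using ij by (simp add: t_def Cons_nth_drop_Suc)
  finally have dc: "drop (Suc i) c = m @ c ! j # t"
    unfolding m_def by (metis append_take_drop_id)
  define B1 where "B1 = dB E {fst (c ! i)} m"
  have "fst (c ! i) \<in> B1" using dB_mono unfolding B1_def by blast
  then have ex: "\<exists>x\<in>B1. \<not> E x (fst (c ! j))" using nd by blast
  have e1: "Dn E c i = length (dpart E {fst (c ! i)} m) + length (dpart E B1 (c ! j # t))"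
    unfolding Dn_def dc dpart_app B1_def by simp
  have e2: "length (dpart E B1 (c ! j # t)) = Suc (length (dpart E (insert (fst (c ! j)) B1) t))"
    using ex by simp
  have e3: "length (dpart E (insert (fst (c ! j)) B1) t) \<ge> length (dpart E {fst (c ! j)} t)"
    by (rule dlen_mono) simp
  have e4: "Dn E c j = length (dpart E {fst (c ! j)} t)" unfolding Dn_def t_def ..
  show ?thesis using e1 e2 e3 e4 by linarith
qed

lemma lcano_props:
  assumes wo: "word_over {..<n} c" and lc: "lcano E n c" and ij: "i < j" "j < length c"
  shows "Dn E c j \<le> Dn E c i \<and> (Dn E c i = Dn E c j \<longrightarrow>
           fst (c ! i) < fst (c ! j) \<and> E (fst (c ! i)) (fst (c ! j)))"
proof -
  have lt: "gk E n c j < gk E n c i" using lcano_trans[OF lc ij] .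
  have "n - fst (c ! j) < Suc n" "n - fst (c ! i) < Suc n" by auto
  from lt[unfolded gk_def, unfolded lex_lt[OF this]]
  have h: "Dn E c j < Dn E c i \<or> (Dn E c j = Dn E c i \<and> n - fst (c ! j) < n - fst (c ! i))" .
  have vi: "fst (c ! i) < n" "fst (c ! j) < n" using wo ij unfolding word_over_def by auto
  show ?thesis
  proof (intro conjI impI)
    show "Dn E c j \<le> Dn E c i" using h by auto
  next
    assume eq: "Dn E c i = Dn E c j"
    then show "fst (c ! i) < fst (c ! j)" using h by auto
    show "E (fst (c ! i)) (fst (c ! j))" using Dn_dep[OF ij] eq by fastforce
  qed
qed

lemma gk_swap:
  assumes ab: "E (fst a) (fst b)"
  shows "k \<noteq> length p \<Longrightarrow> k \<noteq> Suc (length p) \<Longrightarrow> gk E n (p @ b # a # q) k = gk E n (p @ a # b # q) k"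
    and "gk E n (p @ b # a # q) (length p) = gk E n (p @ a # b # q) (Suc (length p))"
    and "gk E n (p @ b # a # q) (Suc (length p)) = gk E n (p @ a # b # q) (length p)"
proof -
  have ba: "E (fst b) (fst a)" using ab symE by blast
  assume k: "k \<noteq> length p" "k \<noteq> Suc (length p)"
  show "gk E n (p @ b # a # q) k = gk E n (p @ a # b # q) k"
  proof (cases "k < length p")
    case True
    have "ceq E (drop (Suc k) p @ a # b # q) (drop (Suc k) p @ b # a # q)"
      by (rule ceq_swap[of E a b "drop (Suc k) p" q, OF ab])
    then show ?thesis unfolding gk_def using True
      by (simp add: Dn_app1 nth_append dpart_ceq(1))
  next
    case False
    define j where "j = k - length p - 2"
    have kj: "k = length p + Suc (Suc j)" using k False unfolding j_def by simp
    show ?thesis unfolding gk_def kj Dn_app2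
      by (simp add: Dn_Cons nth_append)
  qed
next
  show "gk E n (p @ b # a # q) (length p) = gk E n (p @ a # b # q) (Suc (length p))"
    unfolding gk_def using Dn_app2[of E p "b # a # q" 0] Dn_app2[of E p "a # b # q" 1] symE[OF ab]
    by (simp add: Dn_def nth_append)
next
  show "gk E n (p @ b # a # q) (Suc (length p)) = gk E n (p @ a # b # q) (length p)"
    unfolding gk_def using Dn_app2[of E p "b # a # q" 1] Dn_app2[of E p "a # b # q" 0] ab
    by (simp add: Dn_def nth_append)
qed

lemma sum_two:
  fixes h :: "nat \<Rightarrow> nat"
  assumes "Suc i < L"
  shows "(\<Sum>k<L. h k) = h i + h (Suc i) + (\<Sum>k\<in>{..<L} - {i} - {Suc i}. h k)"
proof -
  have "(\<Sum>k<L. h k) = h i + (\<Sum>k\<in>{..<L} - {i}. h k)"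
    using assms by (intro sum.remove) auto
  also have "(\<Sum>k\<in>{..<L} - {i}. h k) = h (Suc i) + (\<Sum>k\<in>{..<L} - {i} - {Suc i}. h k)"
    using assms by (intro sum.remove) auto
  finally show ?thesis by simp
qed

lemma exist_lc:
  assumes "word_over {..<n} c"
  shows "\<exists>c'. ceq E c c' \<and> lcano E n c'"
  using assms
proof (induction "mu E n c" arbitrary: c rule: less_induct)
  case less
  show ?case
  proof (cases "lcano E n c")
    case True then show ?thesis by (intro exI[of _ c]) simp
  next
    case False
    then obtain i where i: "Suc i < length c" "\<not> gk E n c (Suc i) < gk E n c i"
      unfolding lcano_def by blast
    define p where "p = take i c"
    define a where "a = c ! i"
    define b where "b = c ! Suc i"
    define q where "q = drop (Suc (Suc i)) c"
    have lp: "length p = i" using i unfolding p_def by simp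
    have cdec: "c = p @ a # b # q"
      unfolding p_def a_def b_def q_def using i
      by (metis Cons_nth_drop_Suc Suc_lessD append_take_drop_id)
    have va: "fst a < n" "fst b < n" using less.prems i unfolding word_over_def a_def b_def by auto
    have ab: "E (fst a) (fst b)"
    proof (rule ccontr)
      assume "\<not> E (fst a) (fst b)"
      then have "Dn E c (Suc i) < Dn E c i" using Dn_dep[of i "Suc i" c] i unfolding a_def b_def by simp
      then have "gk E n c (Suc i) < gk E n c i"
        unfolding gk_def using lex_lt[of "n - fst (c ! Suc i)" "Suc n" "n - fst (c ! i)"] by auto
      then show False using i by simp
    qed
    have glt: "gk E n c i < gk E n c (Suc i)"
    proof -
      have "gk E n c i \<noteq> gk E n c (Suc i)"
      proof
        assume eq: "gk E n c i = gk E n c (Suc i)"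
        have "n - fst (c ! i) < Suc n" "n - fst (c ! Suc i) < Suc n" by auto
        from lex_eq[OF this eq[unfolded gk_def]]
        have "Dn E c i = Dn E c (Suc i) \<and> n - fst (c ! i) = n - fst (c ! Suc i)" .
        then have "fst a = fst b" using va unfolding a_def b_def by arith
        then show False using ab irrE by metis
      qed
      then show ?thesis using i(2) by simp
    qed
    define c' where "c' = p @ b # a # q"
    have cc: "ceq E c c'" unfolding cdec c'_def by (rule ceq_swap[of E a b p q, OF ab])
    have wo': "word_over {..<n} c'" using less.prems ceq_set[OF cc] unfolding word_over_def by simp
    have len': "length c' = length c" using ceq_length[OF cc] by simp
    have g1: "gk E n c' i = gk E n c (Suc i)" using gk_swap(2)[OF ab, of n p q] lp
      unfolding c'_def cdec by simp
    have g2: "gk E n c' (Suc i) = gk E n c i" using gk_swap(3)[OF ab, of n p q] lp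
      unfolding c'_def cdec by simp
    have g3: "k \<in> {..<length c} - {i} - {Suc i} \<Longrightarrow> k * gk E n c' k = k * gk E n c k" for k
      using gk_swap(1)[OF ab, of k p n q] lp unfolding c'_def cdec by simp
    have "mu E n c' = i * gk E n c' i + Suc i * gk E n c' (Suc i) +
        (\<Sum>k\<in>{..<length c} - {i} - {Suc i}. k * gk E n c' k)"
      unfolding mu_def len' using sum_two[OF i(1)] .
    also have "\<dots> = i * gk E n c (Suc i) + Suc i * gk E n c i +
        (\<Sum>k\<in>{..<length c} - {i} - {Suc i}. k * gk E n c k)"
    proof -
      have S: "(\<Sum>k\<in>{..<length c} - {i} - {Suc i}. k * gk E n c' k) =
          (\<Sum>k\<in>{..<length c} - {i} - {Suc i}. k * gk E n c k)"
        by (rule sum.cong[OF refl], rule g3)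
      show ?thesis unfolding S g1 g2 ..
    qed
    also have "\<dots> < i * gk E n c i + Suc i * gk E n c (Suc i) +
        (\<Sum>k\<in>{..<length c} - {i} - {Suc i}. k * gk E n c k)"
      using glt by simp
    also have "\<dots> = mu E n c" unfolding mu_def using sum_two[OF i(1)] by simp
    finally have "mu E n c' < mu E n c" .
    from less.hyps[OF this wo'] obtain c'' where "ceq E c' c''" "lcano E n c''" by blast
    then show ?thesis using cc ceq_trans by blast
  qed
qed


lemma commutator:
  assumes "E p q"
  shows "raag_eq E [(p, True), (q, True), (p, False), (q, False)] []"
proof -
  have "ceq E [(p, True), (q, True), (p, False), (q, False)] [(q, True), (p, True), (p, False), (q, False)]"
    using ceq_swap0[of E "(p, True)" "(q, True)" "[(p, False), (q, False)]"] assms by simp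
  moreover have "raag_eq E [(q, True), (p, True), (p, False), (q, False)] [(q, True), (q, False)]"
    using raag_cancel[of "[(q, True)]" "(p, True)" "[(q, False)]"] by (simp add: inv_letter_def)
  moreover have "raag_eq E [(q, True), (q, False)] []"
    using raag_cancel0[of "(q, True)" "[]"] by (simp add: inv_letter_def)
  ultimately show ?thesis using ceq_raag raag_trans by blast
qed

lemma canon_props:
  assumes "canonical_expr n E c"
  shows "red E c \<and> cano E c"
proof -
  have wo: "word_over {..<n} c" and lw: "length c = wlen n E c" using assms unfolding canonical_expr_def by auto
  have rc: "red E c" using red_geod[OF wo] lw by simp
  have rD: "\<And>i. i < length c \<Longrightarrow> rcount n E c i = Dn E c i"
    using rcount_D[OF wo rc] unfolding Dn_def by simp
  have "cano E c" unfolding cano_def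
  proof (intro allI impI)
    fix i j assume ij: "i < j \<and> j < length c"
    have A: "rcount n E c j \<le> rcount n E c i" using assms ij unfolding canonical_expr_def by blast
    have B: "rcount n E c i = rcount n E c j \<longrightarrow> fst (c ! i) < fst (c ! j)"
      using assms ij unfolding canonical_expr_def by blast
    show "Dn E c j \<le> Dn E c i \<and> (Dn E c i = Dn E c j \<longrightarrow> fst (c ! i) < fst (c ! j))"
      using A B rD[of i] rD[of j] ij by simp
  qed
  then show ?thesis using rc by simp
qed

lemma canon_exists:
  assumes wo: "word_over {..<n} w"
  shows "\<exists>c. canonical_expr n E c \<and> raag_eq E c w"
proof -
  define r where "r = Phi E w"
  have wr: "word_over {..<n} r" using word_over_Phi[OF wo] unfolding r_def .
  obtain c where cc: "ceq E r c" and lc: "lcano E n c" using exist_lc[OF wr] by blast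
  have rc: "red E c" using red_ceq[OF red_Phi cc[unfolded r_def]] .
  have wc: "word_over {..<n} c" using wr ceq_set[OF cc] unfolding word_over_def by simp
  have rw: "raag_eq E c w"
    using raag_trans[OF ceq_raag[OF ceq_sym[OF cc]] Phi_raag[of w, folded r_def]] .
  have rD: "\<And>i. i < length c \<Longrightarrow> rcount n E c i = Dn E c i"
    using rcount_D[OF wc rc] unfolding Dn_def by simp
  have "canonical_expr n E c"
    unfolding canonical_expr_def
  proof (intro conjI allI impI)
    show "word_over {..<n} c" by (rule wc)
    show "length c = wlen n E c" using red_geod[OF wc] rc by simp
  next
    fix i j assume ij: "i < j \<and> j < length c"
    then show "rcount n E c j \<le> rcount n E c i"
      using lcano_props[OF wc lc, of i j] rD[of i] rD[of j] by simp
  next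
    fix i j assume ij: "i < j \<and> j < length c \<and> rcount n E c i = rcount n E c j"
    then have h: "fst (c ! i) < fst (c ! j) \<and> E (fst (c ! i)) (fst (c ! j))"
      using lcano_props[OF wc lc, of i j] rD[of i] rD[of j] by simp
    then show "fst (c ! i) < fst (c ! j)" by simp
    show "raag_eq E [(fst (c ! i), True), (fst (c ! j), True), (fst (c ! i), False), (fst (c ! j), False)] []"
      using commutator h by blast
  qed
  then show ?thesis using rw by blast
qed

end

theorem lemma3p2:
  fixes n :: nat and E :: "nat \<Rightarrow> nat \<Rightarrow> bool" and w :: "letter list"
  assumes "simplicial_graph n E"
    and "word_over {..<n} w"
  shows "\<exists>!c. canonical_expr n E c \<and> raag_eq E c w"
proof -
  interpret RG E using assms(1) unfolding simplicial_graph_def by unfold_locales blast+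
  show ?thesis
  proof (rule ex_ex1I)
    show "\<exists>c. canonical_expr n E c \<and> raag_eq E c w" using canon_exists[OF assms(2)] .
  next
    fix c1 c2
    assume h1: "canonical_expr n E c1 \<and> raag_eq E c1 w"
      and h2: "canonical_expr n E c2 \<and> raag_eq E c2 w"
    have p1: "red E c1 \<and> cano E c1" using canon_props h1 by blast
    have p2: "red E c2 \<and> cano E c2" using canon_props h2 by blast
    have "raag_eq E c1 c2" using h1 h2 raag_trans raag_sym by blast
    then have "ceq E c1 c2" using red_raag_ceq p1 p2 by blast
    then show "c1 = c2" using uniq p1 p2 by blast
  qed
qed

end
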